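(* Under the triangle scaling property with constant $G\ge1$, the iterates of acc-BPP3 satisfy, for every $T\ge1$ and every $\lambda\in\Lambda$, $$d(\lambda)-d(\lambda_T)\le\frac{4G\,D_h(\lambda,\lambda_0)}{\big(\sum_{k=0}^{T-1}\sqrt{\eta_k}\big)^2}.$$
   Context: $\Lambda\subseteq\mathbb{R}^m$ closed convex, $d:\Lambda\to\mathbb{R}$ concave. $h$ strictly convex, continuously differentiable on $\Lambda$, $D_h(\lambda,\tilde\lambda)=h(\lambda)-h(\tilde\lambda)-\nabla h(\tilde\lambda)^\top(\lambda-\tilde\lambda)$. Triangle scaling property with constant $G$: $D_h((1-\theta)\lambda+\theta\lambda_1,(1-\theta)\lambda+\theta\lambda_2)\le G\theta^2D_h(\lambda_1,\lambda_2)$ for all $\lambda,\lambda_1,\lambda_2\in\Lambda$, $\theta\in[0,1]$. Algorithm acc-BPP3: given $\lambda_0\in\Lambda$, $v_0=\lambda_0$, $\theta_0=1$, $\eta_k>0$; for $k\ge0$: $y_k=\theta_kv_k+(1-\theta_k)\lambda_k$; $\lambda_{k+1}\in\arg\max_{\lambda\in\Lambda}\{d(\lambda)-\frac1{\eta_k}D_h(\lambda,y_k)\}$; $v_{k+1}\in\arg\max_{\lambda\in\Lambda}\big\{-GD_h(\lambda,\lambda_0)+\sum_{j=0}^k\frac{\eta_j}{\theta_j}\big(d(\lambda_{j+1})+\frac1{\eta_j}(\nabla h(\lambda_{j+1})-\nabla h(y_j))^\top(\lambda-\lambda_{j+1})\big)\big\}$; $\theta_{k+1}\in(0,1]$ is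 defined by $\frac{\eta_k}{\theta_k^2}=\frac{\eta_{k+1}}{\theta_{k+1}^2}-\frac{\eta_{k+1}}{\theta_{k+1}}$. All maximizers are assumed to exist. *)

theory Defs
  imports "HOL-Analysis.Analysis"
begin

definition strictly_convex_on :: "'a::real_vector set \<Rightarrow> ('a \<Rightarrow> real) \<Rightarrow> bool" where
  "strictly_convex_on S f \<longleftrightarrow> convex S \<and>
    (\<forall>x\<in>S. \<forall>y\<in>S. x \<noteq> y \<longrightarrow> (\<forall>t. 0 < t \<and> t < 1 \<longrightarrow>
        f ((1 - t) *\<^sub>R x + t *\<^sub>R y) < (1 - t) * f x + t * f y))"

definition bregman :: "('a::euclidean_space \<Rightarrow> real) \<Rightarrow> ('a \<Rightarrow> 'a) \<Rightarrow> 'a \<Rightarrow> 'a \<Rightarrow> real" where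
  "bregman h gh x y = h x - h y - gh y \<bullet> (x - y)"

definition triangle_scaling :: "('a::euclidean_space \<Rightarrow> real) \<Rightarrow> ('a \<Rightarrow> 'a) \<Rightarrow> 'a set \<Rightarrow> real \<Rightarrow> bool" where
  "triangle_scaling h gh L G \<longleftrightarrow>
    (\<forall>l\<in>L. \<forall>l1\<in>L. \<forall>l2\<in>L. \<forall>\<theta>::real. 0 \<le> \<theta> \<and> \<theta> \<le> 1 \<longrightarrow>
       bregman h gh ((1 - \<theta>) *\<^sub>R l + \<theta> *\<^sub>R l1) ((1 - \<theta>) *\<^sub>R l + \<theta> *\<^sub>R l2)
         \<le> G * \<theta>\<^sup>2 * bregman h gh l1 l2)"

end

theory Submission
  imports Defs
begin

lemma dir_lim:
  fixes h :: "'a::euclidean_space \<Rightarrow> real"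
  assumes hd: "(h has_derivative (\<lambda>u. gh x \<bullet> u)) (at x)"
  shows "((\<lambda>t. (h (x + t *\<^sub>R w) - h x) / t) \<longlongrightarrow> gh x \<bullet> w) (at_right 0)"
proof -
  have d1: "((\<lambda>t::real. x + t *\<^sub>R w) has_derivative (\<lambda>t. t *\<^sub>R w)) (at 0)"
    by (auto intro!: derivative_eq_intros)
  have hd0: "(h has_derivative (\<lambda>u. gh x \<bullet> u)) (at (x + 0 *\<^sub>R w))" using hd by simp
  have "((\<lambda>t. h (x + t *\<^sub>R w)) has_derivative (\<lambda>t. gh x \<bullet> (t *\<^sub>R w))) (at 0)"
    using has_derivative_compose[OF d1 hd0] by (simp add: o_def)
  hence "((\<lambda>t. h (x + t *\<^sub>R w)) has_derivative (\<lambda>t. (gh x \<bullet> w) * t)) (at 0)"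
    by (simp add: mult.commute)
  hence "((\<lambda>t. h (x + t *\<^sub>R w)) has_field_derivative (gh x \<bullet> w)) (at 0)"
    by (simp add: has_field_derivative_def)
  hence "((\<lambda>t. (h (x + t *\<^sub>R w) - h x) / t) \<longlongrightarrow> gh x \<bullet> w) (at 0)"
    by (simp add: has_field_derivative_iff)
  thus ?thesis by (rule filterlim_mono) (simp_all add: at_le)
qed

lemma dir_lower:
  fixes h :: "'a::euclidean_space \<Rightarrow> real"
  assumes hd: "(h has_derivative (\<lambda>u. gh x \<bullet> u)) (at x)"
    and b: "\<And>t. 0 < t \<Longrightarrow> t < 1 \<Longrightarrow> c \<le> (h (x + t *\<^sub>R w) - h x) / t"
  shows "c \<le> gh x \<bullet> w"
proof (rule tendsto_lowerbound[OF dir_lim[where h=h and gh=gh and x=x and w=w, OF hd]])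
  show "\<forall>\<^sub>F t in at_right 0. c \<le> (h (x + t *\<^sub>R w) - h x) / t"
  proof -
    have "eventually (\<lambda>t. t \<in> {0<..<1}) (at_right (0::real))"
      by (rule eventually_at_right_real) simp
    thus ?thesis by (rule eventually_mono) (use b in auto)
  qed
qed simp

lemma dir_upper:
  fixes h :: "'a::euclidean_space \<Rightarrow> real"
  assumes hd: "(h has_derivative (\<lambda>u. gh x \<bullet> u)) (at x)"
    and b: "\<And>t. 0 < t \<Longrightarrow> t < 1 \<Longrightarrow> (h (x + t *\<^sub>R w) - h x) / t \<le> c"
  shows "gh x \<bullet> w \<le> c"
proof (rule tendsto_upperbound[OF dir_lim[where h=h and gh=gh and x=x and w=w, OF hd]])
  show "\<forall>\<^sub>F t in at_right 0. (h (x + t *\<^sub>R w) - h x) / t \<le> c"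
  proof -
    have "eventually (\<lambda>t. t \<in> {0<..<1}) (at_right (0::real))"
      by (rule eventually_at_right_real) simp
    thus ?thesis by (rule eventually_mono) (use b in auto)
  qed
qed simp

lemma seg_mem:
  assumes "convex L" "x \<in> L" "z \<in> L" "0 \<le> t" "t \<le> 1"
  shows "x + t *\<^sub>R (z - x) \<in> L"
proof -
  have "x + t *\<^sub>R (z - x) = (1 - t) *\<^sub>R x + t *\<^sub>R z" by (simp add: algebra_simps)
  thus ?thesis using assms convexD_alt by metis
qed

lemma breg_nonneg:
  fixes h :: "'a::euclidean_space \<Rightarrow> real"
  assumes sc: "strictly_convex_on L h" and x: "x \<in> L" and z: "z \<in> L"
    and hd: "(h has_derivative (\<lambda>u. gh x \<bullet> u)) (at x)"
  shows "0 \<le> bregman h gh z x"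
proof -
  have "gh x \<bullet> (z - x) \<le> h z - h x"
  proof (rule dir_upper[where h=h and gh=gh and x=x, OF hd])
    fix t :: real assume t: "0 < t" "t < 1"
    have "h (x + t *\<^sub>R (z - x)) \<le> (1 - t) * h x + t * h z"
    proof (cases "x = z")
      case True thus ?thesis by (simp add: algebra_simps)
    next
      case False
      have "x + t *\<^sub>R (z - x) = (1 - t) *\<^sub>R x + t *\<^sub>R z" by (simp add: algebra_simps)
      thus ?thesis using sc False x z t unfolding strictly_convex_on_def by force
    qed
    hence "h (x + t *\<^sub>R (z - x)) - h x \<le> t * (h z - h x)" by (simp add: algebra_simps)
    thus "(h (x + t *\<^sub>R (z - x)) - h x) / t \<le> h z - h x" using t
      by (simp add: divide_le_eq mult.commute)
  qed
  thus ?thesis by (simp add: bregman_def)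
qed

lemma three_point:
  "bregman h gh z y - bregman h gh z x - bregman h gh x y = (gh x - gh y) \<bullet> (z - x)"
  by (simp add: bregman_def algebra_simps inner_diff_left inner_diff_right)

lemma prox_opt:
  fixes h d :: "'a::euclidean_space \<Rightarrow> real"
  assumes cL: "convex L" and dc: "concave_on L d" and l: "l \<in> L" and eta: "eta > 0"
    and hd: "(h has_derivative (\<lambda>u. gh l \<bullet> u)) (at l)"
    and opt: "\<And>z. z \<in> L \<Longrightarrow> d z - bregman h gh z y / eta \<le> d l - bregman h gh l y / eta"
    and z: "z \<in> L"
  shows "d z \<le> d l + (1 / eta) * ((gh l - gh y) \<bullet> (z - l))"
proof -
  define w where "w = z - l"
  have "eta * (d z - d l) + gh y \<bullet> w \<le> gh l \<bullet> w"
  proof (rule dir_lower[where h=h and gh=gh and x=l, OF hd])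
    fix t :: real assume t: "0 < t" "t < 1"
    have zt: "l + t *\<^sub>R w \<in> L" unfolding w_def using seg_mem[OF cL l z] t by simp
    have "l + t *\<^sub>R w = (1 - t) *\<^sub>R l + t *\<^sub>R z" unfolding w_def by (simp add: algebra_simps)
    hence c1: "(1 - t) * d l + t * d z \<le> d (l + t *\<^sub>R w)"
      using concave_onD[OF dc, of t l z] t l z by simp
    have c2: "d (l + t *\<^sub>R w) - bregman h gh (l + t *\<^sub>R w) y / eta \<le> d l - bregman h gh l y / eta"
      using opt[OF zt] .
    have e: "bregman h gh (l + t *\<^sub>R w) y - bregman h gh l y = h (l + t *\<^sub>R w) - h l - t * (gh y \<bullet> w)"
      by (simp add: bregman_def algebra_simps inner_diff_right)
    have "d (l + t *\<^sub>R w) - d l \<le> (bregman h gh (l + t *\<^sub>R w) y - bregman h gh l y) / eta"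
      using c2 by (simp add: diff_divide_distrib)
    hence "t * (d z - d l) \<le> (h (l + t *\<^sub>R w) - h l - t * (gh y \<bullet> w)) / eta"
      using c1 unfolding e by (simp add: algebra_simps)
    hence "eta * (t * (d z - d l)) \<le> h (l + t *\<^sub>R w) - h l - t * (gh y \<bullet> w)"
      using eta by (simp add: le_divide_eq mult.commute)
    hence "t * (eta * (d z - d l) + gh y \<bullet> w) \<le> h (l + t *\<^sub>R w) - h l"
      by (simp add: algebra_simps)
    thus "eta * (d z - d l) + gh y \<bullet> w \<le> (h (l + t *\<^sub>R w) - h l) / t"
      using t by (simp add: le_divide_eq mult.commute)
  qed
  hence "eta * (d z - d l) \<le> (gh l - gh y) \<bullet> w" by (simp add: inner_diff_left)
  hence "d z - d l \<le> (1 / eta) * ((gh l - gh y) \<bullet> w)" using eta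
    by (simp add: field_simps)
  thus ?thesis unfolding w_def by simp
qed

lemma mirror_opt:
  fixes h :: "'a::euclidean_space \<Rightarrow> real"
  assumes cL: "convex L" and v: "v \<in> L" and G: "G > 0"
    and hd: "(h has_derivative (\<lambda>u. gh v \<bullet> u)) (at v)"
    and opt: "\<And>z. z \<in> L \<Longrightarrow> - G * h z + c \<bullet> z \<le> - G * h v + c \<bullet> v"
    and z: "z \<in> L"
  shows "- G * h z + c \<bullet> z \<le> - G * h v + c \<bullet> v - G * bregman h gh z v"
proof -
  define w where "w = z - v"
  have "(c \<bullet> w) / G \<le> gh v \<bullet> w"
  proof (rule dir_lower[where h=h and gh=gh and x=v, OF hd])
    fix t :: real assume t: "0 < t" "t < 1"
    have zt: "v + t *\<^sub>R w \<in> L" unfolding w_def using seg_mem[OF cL v z] t by simp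
    have "- G * h (v + t *\<^sub>R w) + c \<bullet> (v + t *\<^sub>R w) \<le> - G * h v + c \<bullet> v" using opt[OF zt] .
    hence "t * (c \<bullet> w) \<le> G * (h (v + t *\<^sub>R w) - h v)" by (simp add: algebra_simps inner_add_right)
    hence "t * ((c \<bullet> w) / G) \<le> h (v + t *\<^sub>R w) - h v" using G
      by (simp add: field_simps)
    thus "(c \<bullet> w) / G \<le> (h (v + t *\<^sub>R w) - h v) / t"
      using t by (simp add: le_divide_eq mult.commute)
  qed
  hence "c \<bullet> w \<le> G * (gh v \<bullet> w)" using G by (simp add: divide_le_eq mult.commute)
  thus ?thesis unfolding w_def bregman_def by (simp add: algebra_simps inner_diff_right)
qed

lemma sqrt_step:
  fixes s r e :: real
  assumes "s > 0" "r \<ge> 0" "e \<ge> 0" "s^2 = r^2 + e * s"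
  shows "r + e / 2 \<le> s"
proof -
  have "e * s \<le> s * s" using assms by (simp add: power2_eq_square)
  hence "s \<ge> e" using assms(1) by (meson mult_le_cancel_right_pos)
  have "(s - e/2)^2 = r^2 + e^2/4" using assms(4) by (simp add: power2_diff power2_eq_square field_simps)
  hence "r^2 \<le> (s - e/2)^2" by simp
  moreover have "0 \<le> s - e/2" using \<open>s \<ge> e\<close> assms(3) by linarith
  ultimately have "r \<le> s - e/2" by (rule power2_le_imp_le)
  thus ?thesis by simp
qed
theorem mainTheorem10:
  fixes L :: "'a::euclidean_space set"
    and d h :: "'a \<Rightarrow> real" and gh :: "'a \<Rightarrow> 'a"
    and G :: real
    and lam v y :: "nat \<Rightarrow> 'a" and theta eta :: "nat \<Rightarrow> real"
    and T :: nat and \<mu> :: 'a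
  assumes L_closed: "closed L" and L_convex: "convex L"
    and d_concave: "concave_on L d"
    and h_strict: "strictly_convex_on L h"
    and h_grad: "\<And>x. x \<in> L \<Longrightarrow> (h has_derivative (\<lambda>u. gh x \<bullet> u)) (at x)"
    and gh_cont: "continuous_on L gh"
    and TSP: "triangle_scaling h gh L G"
    and G_ge: "G \<ge> 1"
    and lam0: "lam 0 \<in> L"
    and v0: "v 0 = lam 0"
    and theta0: "theta 0 = 1"
    and eta_pos: "\<And>k. eta k > 0"
    and y_def: "\<And>k. y k = theta k *\<^sub>R v k + (1 - theta k) *\<^sub>R lam k"
    and lam_mem: "\<And>k. lam (Suc k) \<in> L"
    and lam_max: "\<And>k z. z \<in> L \<Longrightarrow>
        d z - bregman h gh z (y k) / eta k
          \<le> d (lam (Suc k)) - bregman h gh (lam (Suc k)) (y k) / eta k"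
    and v_mem: "\<And>k. v (Suc k) \<in> L"
    and v_max: "\<And>k z. z \<in> L \<Longrightarrow>
        - G * bregman h gh z (lam 0)
          + (\<Sum>j\<le>k. eta j / theta j *
               (d (lam (Suc j)) + (1 / eta j) * ((gh (lam (Suc j)) - gh (y j)) \<bullet> (z - lam (Suc j)))))
        \<le> - G * bregman h gh (v (Suc k)) (lam 0)
          + (\<Sum>j\<le>k. eta j / theta j *
               (d (lam (Suc j)) + (1 / eta j) * ((gh (lam (Suc j)) - gh (y j)) \<bullet> (v (Suc k) - lam (Suc j)))))"
    and theta_range: "\<And>k. 0 < theta (Suc k) \<and> theta (Suc k) \<le> 1"
    and theta_rec: "\<And>k. eta k / (theta k)\<^sup>2
        = eta (Suc k) / (theta (Suc k))\<^sup>2 - eta (Suc k) / theta (Suc k)"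
    and T_ge: "T \<ge> 1"
    and mu_mem: "\<mu> \<in> L"
  shows "d \<mu> - d (lam T)
      \<le> 4 * G * bregman h gh \<mu> (lam 0) / (\<Sum>k<T. sqrt (eta k))\<^sup>2"
proof -
  have Gp: "G > 0" using G_ge by simp
  have th: "0 < theta k \<and> theta k \<le> 1" for k
    by (cases k) (use theta0 theta_range in auto)
  have lamL: "lam n \<in> L" for n by (cases n) (use lam0 lam_mem in auto)
  have vL: "v n \<in> L" for n by (cases n) (use lam0 v0 v_mem in auto)
  have yn: "y n = (1 - theta n) *\<^sub>R lam n + theta n *\<^sub>R v n" for n
    using y_def[of n] by (simp add: add.commute)
  have yL: "y k \<in> L" for k
    unfolding yn using convexD_alt[OF L_convex lamL[of k] vL[of k], of "theta k"] th[of k] by simp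
  define a where "a j = eta j / theta j" for j
  define S where "S k = eta k / (theta k)^2" for k
  have apos: "a j > 0" for j using th[of j] eta_pos[of j] by (simp add: a_def)
  have Spos: "S j > 0" for j using th[of j] eta_pos[of j] by (simp add: S_def)
  have Ssum: "S k = (\<Sum>j\<le>k. a j)" for k
  proof (induction k)
    case 0 show ?case using theta0 by (simp add: S_def a_def)
  next
    case (Suc k)
    have "S (Suc k) = S k + a (Suc k)" using theta_rec[of k] by (simp add: S_def a_def)
    thus ?case using Suc by simp
  qed
  have aS: "a k = S k * theta k" for k using th[of k] by (simp add: a_def S_def power2_eq_square)
  have Sth2: "S k * (theta k)^2 = eta k" for k using th[of k] by (simp add: S_def)
  define g where "g j = gh (lam (Suc j)) - gh (y j)" for j
  define ell where "ell j z = d (lam (Suc j)) + (1 / eta j) * (g j \<bullet> (z - lam (Suc j)))" for j z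
  have dell: "d z \<le> ell j z" if "z \<in> L" for j z
    unfolding ell_def g_def
    by (rule prox_opt[where h=h and gh=gh and l="lam (Suc j)" and y="y j", OF L_convex d_concave lam_mem[of j] eta_pos[of j] h_grad[OF lam_mem[of j]]]) (auto intro: lam_max that)
  define P where "P n z = - G * bregman h gh z (lam 0) + (\<Sum>j<n. a j * ell j z)" for n z
  have Pv: "P (Suc k) z = - G * bregman h gh z (lam 0) + (\<Sum>j\<le>k. eta j / theta j * (d (lam (Suc j)) + (1 / eta j) * ((gh (lam (Suc j)) - gh (y j)) \<bullet> (z - lam (Suc j)))))" for k z
    by (simp add: P_def a_def ell_def g_def lessThan_Suc_atMost)
  have Pmax: "P (Suc k) z \<le> P (Suc k) (v (Suc k))" if "z \<in> L" for k z
    unfolding Pv using v_max[OF that] by simp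
  define c where "c n = G *\<^sub>R gh (lam 0) + (\<Sum>j<n. (a j / eta j) *\<^sub>R g j)" for n
  define K where "K n = G * h (lam 0) - G * (gh (lam 0) \<bullet> lam 0) + (\<Sum>j<n. a j * (d (lam (Suc j)) - (1 / eta j) * (g j \<bullet> lam (Suc j))))" for n
  have Paff: "P n z = - G * h z + c n \<bullet> z + K n" for n z
  proof -
    have e1: "a j * ell j z = (a j / eta j) * (g j \<bullet> z) + a j * (d (lam (Suc j)) - (1 / eta j) * (g j \<bullet> lam (Suc j)))" for j
      by (simp add: ell_def inner_diff_right algebra_simps)
    have "(\<Sum>j<n. a j * ell j z) = (\<Sum>j<n. (a j / eta j) *\<^sub>R g j) \<bullet> z + (\<Sum>j<n. a j * (d (lam (Suc j)) - (1 / eta j) * (g j \<bullet> lam (Suc j))))"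
      by (simp add: e1 sum.distrib inner_sum_left)
    thus ?thesis by (simp add: P_def c_def K_def bregman_def inner_add_left inner_diff_right algebra_simps)
  qed
  have Q: "P n z \<le> P n (v n) - G * bregman h gh z (v n)" if zL: "z \<in> L" for n z
  proof (cases n)
    case 0 then show ?thesis using v0 by (simp add: P_def bregman_def)
  next
    case (Suc k)
    have opt: "- G * h z' + c n \<bullet> z' \<le> - G * h (v n) + c n \<bullet> v n" if "z' \<in> L" for z'
    proof -
      have "P n z' \<le> P n (v n)" using Pmax[OF that] Suc by simp
      thus ?thesis by (simp add: Paff)
    qed
    have "- G * h z + c n \<bullet> z \<le> - G * h (v n) + c n \<bullet> v n - G * bregman h gh z (v n)"
      by (rule mirror_opt[where h=h and gh=gh and v="v n", OF L_convex vL[of n] Gp h_grad[OF vL[of n]] opt zL])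
    thus ?thesis by (simp add: Paff)
  qed
  define S' where "S' n = (\<Sum>j<n. a j)" for n
  have S'S: "S' (Suc n) = S n" for n by (simp add: S'_def Ssum lessThan_Suc_atMost)
  have S'n: "S' n = S n * (1 - theta n)" for n
  proof -
    have "S' (Suc n) = S' n + a n" by (simp add: S'_def)
    hence "S' n = S n - a n" using S'S[of n] by simp
    thus ?thesis by (simp add: aS algebra_simps)
  qed
  have S'nn: "S' n \<ge> 0" for n using apos unfolding S'_def by (simp add: sum_nonneg less_imp_le)
  have C: "P n (v n) \<le> S' n * d (lam n)" for n
  proof (induction n)
    case 0 show ?case by (simp add: P_def S'_def bregman_def v0)
  next
    case (Suc n)
    define vv where "vv = v (Suc n)"
    define w where "w = (1 - theta n) *\<^sub>R lam n + theta n *\<^sub>R vv"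
    have wL: "w \<in> L" unfolding w_def vv_def
      using convexD_alt[OF L_convex lamL[of n] vL[of "Suc n"], of "theta n"] th[of n] by simp
    have s1: "P (Suc n) vv = P n vv + a n * ell n vv" by (simp add: P_def)
    have s2: "P n vv \<le> P n (v n) - G * bregman h gh vv (v n)" unfolding vv_def by (rule Q[OF vL[of "Suc n"]])
    have s3: "S' n * d (lam n) \<le> S' n * ell n (lam n)" by (rule mult_left_mono[OF dell[OF lamL[of n]] S'nn[of n]])
    have s4: "S' n * ell n (lam n) + a n * ell n vv = S n * ell n w"
      unfolding S'n aS ell_def w_def using eta_pos[of n]
      by (simp add: inner_diff_right inner_add_right field_simps)
    have s5: "g n \<bullet> (w - lam (Suc n)) \<le> bregman h gh w (y n)"
      using three_point[of h gh w "y n" "lam (Suc n)"]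
        breg_nonneg[where gh=gh and x="lam (Suc n)", OF h_strict lamL[of "Suc n"] wL h_grad[OF lamL[of "Suc n"]]]
        breg_nonneg[where gh=gh and x="y n", OF h_strict yL[of n] lamL[of "Suc n"] h_grad[OF yL[of n]]]
      by (simp add: g_def)
    have TS: "\<forall>l\<in>L. \<forall>l1\<in>L. \<forall>l2\<in>L. \<forall>\<theta>::real. 0 \<le> \<theta> \<and> \<theta> \<le> 1 \<longrightarrow>
       bregman h gh ((1 - \<theta>) *\<^sub>R l + \<theta> *\<^sub>R l1) ((1 - \<theta>) *\<^sub>R l + \<theta> *\<^sub>R l2)
         \<le> G * \<theta>\<^sup>2 * bregman h gh l1 l2" using TSP unfolding triangle_scaling_def .
    have t01: "0 \<le> theta n" "theta n \<le> 1" using th[of n] by auto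
    have s6: "bregman h gh w (y n) \<le> G * (theta n)^2 * bregman h gh vv (v n)"
      unfolding w_def yn using TS lamL[of n] vL[of "Suc n"] vL[of n] t01 unfolding vv_def by blast
    have s7a: "(1/eta n) * (g n \<bullet> (w - lam (Suc n))) \<le> (1/eta n) * (G * (theta n)^2 * bregman h gh vv (v n))"
      by (rule mult_left_mono) (use s5 s6 eta_pos[of n] in auto)
    have s7b: "S n * ell n w \<le> S n * (d (lam (Suc n)) + (1/eta n) * (G * (theta n)^2 * bregman h gh vv (v n)))"
      unfolding ell_def by (rule mult_left_mono) (use s7a Spos[of n] in auto)
    have s7c: "S n * ((1/eta n) * (G * (theta n)^2 * bregman h gh vv (v n))) = G * bregman h gh vv (v n)"
    proof -
      have "S n * ((1/eta n) * (G * (theta n)^2 * bregman h gh vv (v n))) = (S n * (theta n)^2) / eta n * (G * bregman h gh vv (v n))"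
        by (simp add: algebra_simps)
      also have "\<dots> = G * bregman h gh vv (v n)" using Sth2[of n] eta_pos[of n] by simp
      finally show ?thesis .
    qed
    have "P (Suc n) vv \<le> S n * d (lam (Suc n))"
      using s1 s2 s3 s4 s7b s7c Suc.IH by (simp add: distrib_left)
    thus ?case using S'S[of n] by (simp add: vv_def)
  qed
  obtain k where T: "T = Suc k" using T_ge by (cases T) auto
  have f1: "P T \<mu> \<le> P T (v T)" using Pmax[OF mu_mem] T by simp
  have f2: "- G * bregman h gh \<mu> (lam 0) + S' T * d \<mu> \<le> P T \<mu>"
  proof -
    have "(\<Sum>j<T. a j * d \<mu>) \<le> (\<Sum>j<T. a j * ell j \<mu>)"
      by (rule sum_mono, rule mult_left_mono) (use dell[OF mu_mem] apos in \<open>auto intro: less_imp_le\<close>)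
    thus ?thesis by (simp add: P_def S'_def sum_distrib_right)
  qed
  define B where "B = G * bregman h gh \<mu> (lam 0)"
  have Bnn: "B \<ge> 0" unfolding B_def using Gp breg_nonneg[where gh=gh and x="lam 0", OF h_strict lam0 mu_mem h_grad[OF lam0]] by simp
  have "S k * (d \<mu> - d (lam T)) \<le> B"
    using f1 f2 C[of T] S'S[of k] T unfolding B_def by (simp add: algebra_simps)
  hence f3: "d \<mu> - d (lam T) \<le> B / S k" using Spos[of k] by (simp add: le_divide_eq mult.commute)
  have sq: "(\<Sum>j\<le>k. sqrt (eta j)) \<le> 2 * sqrt (S k)" for k
  proof (induction k)
    case 0 show ?case using theta0 eta_pos[of 0] by (simp add: S_def)
  next
    case (Suc k)
    have st: "S (Suc k) = S k + a (Suc k)" using Ssum by simp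
    have "sqrt (eta (Suc k)) * sqrt (S (Suc k)) = sqrt ((S (Suc k) * theta (Suc k))^2)"
    proof -
      have "(S (Suc k) * theta (Suc k))^2 = S (Suc k) * (S (Suc k) * (theta (Suc k))^2)"
        by (simp add: power2_eq_square)
      also have "\<dots> = eta (Suc k) * S (Suc k)" using Sth2[of "Suc k"] by simp
      finally show ?thesis by (simp add: real_sqrt_mult[symmetric])
    qed
    also have "\<dots> = a (Suc k)" using aS[of "Suc k"] apos[of "Suc k"] by simp
    finally have ea: "sqrt (eta (Suc k)) * sqrt (S (Suc k)) = a (Suc k)" .
    have "sqrt (S k) + sqrt (eta (Suc k)) / 2 \<le> sqrt (S (Suc k))"
    proof (rule sqrt_step)
      show "0 < sqrt (S (Suc k))" using Spos by simp
      show "0 \<le> sqrt (S k)" using Spos[of k] by simp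
      show "0 \<le> sqrt (eta (Suc k))" using eta_pos[of "Suc k"] by simp
      show "(sqrt (S (Suc k)))\<^sup>2 = (sqrt (S k))\<^sup>2 + sqrt (eta (Suc k)) * sqrt (S (Suc k))"
        using ea st Spos[of k] Spos[of "Suc k"] by simp
    qed
    thus ?case using Suc.IH by simp
  qed
  have sumT: "(\<Sum>j<T. sqrt (eta j)) = (\<Sum>j\<le>k. sqrt (eta j))" using T by (simp add: lessThan_Suc_atMost)
  have Spos2: "(\<Sum>j\<le>k. sqrt (eta j)) > 0"
    by (rule sum_pos) (use eta_pos in auto)
  have SB: "(\<Sum>j<T. sqrt (eta j))^2 \<le> 4 * S k"
  proof -
    have "(\<Sum>j\<le>k. sqrt (eta j))^2 \<le> (2 * sqrt (S k))^2"
      by (rule power_mono[OF sq[of k]]) (use Spos2 in simp)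
    also have "\<dots> = 4 * S k" using Spos[of k] by (simp add: power_mult_distrib)
    finally show ?thesis using sumT by simp
  qed
  have "B / S k = 4 * B / (4 * S k)" by simp
  also have "\<dots> \<le> 4 * B / (\<Sum>j<T. sqrt (eta j))^2"
    by (rule divide_left_mono[OF SB]) (use Bnn Spos[of k] Spos2 sumT in auto)
  finally show ?thesis using f3 unfolding B_def by simp
qed

end
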